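(* Let $\alpha,\beta,\gamma\in\mathbb{Z}_2^n$ and $a,b\in\mathbb{Z}_2$, and let $\omega=\omega(\alpha,\beta,\gamma)$. Then $\mathrm{padp}_{a,b}(\alpha,\beta,\gamma)=0$ if and only if $\omega$ satisfies at least one pattern in the list $Q_{a,b}$, where: $Q_{0,0}$: [.*d0*], [6$\hat6$*7.*], [7$\hat7$*6.*], [7$\hat7$*0$\gamma_0$*]; $Q_{0,1}$: [.*d0*], [4$\hat4$*5.*], [4$\hat4$*0$\beta_0$*], [5$\hat5$*], [5$\hat5$*4.*], [5$\hat5$*1$\beta_0$*], [5$\hat5$*2$\gamma_0$*], [$\beta_0$*]; $Q_{1,0}$: [.*d0*], [2$\hat2$*3.*], [2$\hat2$*0$\alpha_0$*], [3$\hat3$*], [3$\hat3$*2.*], [3$\hat3$*1$\alpha_0$*], [3$\hat3$*4$\gamma_0$*], [$\alpha_0$*]; $Q_{1,1}$: [.*d0*], [0$\hat0$*], [0$\hat0$*1.*], [0$\hat0$*2$\alpha_0$*], [0$\hat0$*4$\beta_0$*], [1$\hat1$*0.*], [1$\hat1$*3$\alpha_0$*], [1$\hat1$*5$\beta_0$*], [1$\hat1$*6$\gamma_0$*], [$\alpha_0$*], [$\beta_0$*].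
   Context: For $\alpha,\beta,\gamma\in\mathbb{Z}_2^n$ (with $x=(x_0,\dots,x_{n-1})$, $x_0$ most significant) the octal word $\omega(\alpha,\beta,\gamma)\in\{0,\dots,7\}^n$ has symbols $\omega_i=4\alpha_i+2\beta_i+\gamma_i$; indices $0,\dots,7$ are identified with $\mathbb{Z}_2^3$ via $(p_0,p_1,p_2)\leftrightarrow4p_0+2p_1+p_2$, so $\oplus$ applies to them. $e_0,\dots,e_7$ are the standard basis row vectors of $\mathbb{Q}^8$. $A_0$ is $\frac14$ times the $8\times8$ matrix with rows $(4,0,0,1,0,1,1,0)$, $(0,0,0,1,0,1,0,0)$, $(0,0,0,1,0,0,1,0)$, $(0,0,0,1,0,0,0,0)$, $(0,0,0,0,0,1,1,0)$, $(0,0,0,0,0,1,0,0)$, $(0,0,0,0,0,0,1,0)$, $(0,\dots,0)$, and $(A_k)_{i,j}=(A_0)_{i\oplus k,j\oplus k}$. With $L_{0,0}=(1,1,0,0,0,0,0,0)$, $L_{0,1}=(0,0,1,1,0,0,0,0)$, $L_{1,0}=(0,0,0,0,1,1,0,0)$, $L_{1,1}=(0,0,0,0,0,0,1,1)$, $\mathrm{padp}_{a,b}(\alpha,\beta,\gamma)=L_{a,b}A_{\omega_0}\cdots A_{\omega_{n-1}}e_0^T$. Patterns: a pattern is written between [ (most significant end) and ] (least significant end), and a word satisfies it if the whole word $\omega_0\cdots\omega_{n-1}$ matches it as a regular expression, where each pattern symbol matches one octal symbol: a digit $t$ matches exactly $t$; '.' matches any symbol; d matches $1,2,4,7$; e matches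 $0,3,5,6$; $\hat t$ matches $t,t\oplus3,t\oplus5$; $\alpha_0$ matches $0,1,2,3$; $\beta_0$ matches $0,1,4,5$; $\gamma_0$ matches $0,2,4,6$; s* matches zero or more consecutive symbols each matched by s. *)

theory Defs
  imports Complex_Main
begin

text \<open>Bit vectors in Z_2^n are lists of booleans (index 0 = most significant).
  The octal word has symbols 4 alpha_i + 2 beta_i + gamma_i.\<close>

definition omega :: "bool list \<Rightarrow> bool list \<Rightarrow> bool list \<Rightarrow> nat list" where
  "omega \<alpha> \<beta> \<gamma> =
     map (\<lambda>(x, y, z). 4 * of_bool x + 2 * of_bool y + of_bool z) (zip \<alpha> (zip \<beta> \<gamma>))"

type_synonym mat8 = "nat \<Rightarrow> nat \<Rightarrow> rat"
type_synonym vec8 = "nat \<Rightarrow> rat"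

definition matmul :: "mat8 \<Rightarrow> mat8 \<Rightarrow> mat8" where
  "matmul M N = (\<lambda>i j. \<Sum>k<8. M i k * N k j)"

definition idmat :: mat8 where
  "idmat = (\<lambda>i j. of_bool (i = j))"

definition A0_rows :: "rat list list" where
  "A0_rows = [[4,0,0,1,0,1,1,0],
              [0,0,0,1,0,1,0,0],
              [0,0,0,1,0,0,1,0],
              [0,0,0,1,0,0,0,0],
              [0,0,0,0,0,1,1,0],
              [0,0,0,0,0,1,0,0],
              [0,0,0,0,0,0,1,0],
              [0,0,0,0,0,0,0,0]]"

definition A0 :: mat8 where
  "A0 = (\<lambda>i j. (A0_rows ! i ! j) / 4)"

definition Amat :: "nat \<Rightarrow> mat8" where
  "Amat k = (\<lambda>i j. A0 (xor i k) (xor j k))"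

definition matprod :: "nat list \<Rightarrow> mat8" where
  "matprod w = foldr (\<lambda>k M. matmul (Amat k) M) w idmat"

definition Lvec :: "bool \<Rightarrow> bool \<Rightarrow> vec8" where
  "Lvec a b = (\<lambda>i. of_bool (i div 2 = 2 * of_bool a + of_bool b))"

definition e0 :: vec8 where
  "e0 = (\<lambda>j. of_bool (j = 0))"

definition padp :: "bool \<Rightarrow> bool \<Rightarrow> bool list \<Rightarrow> bool list \<Rightarrow> bool list \<Rightarrow> rat" where
  "padp a b \<alpha> \<beta> \<gamma> =
     (let P = matprod (omega \<alpha> \<beta> \<gamma>) in \<Sum>i<8. \<Sum>j<8. Lvec a b i * P i j * e0 j)"

datatype pitem = Sym "nat set" | Star "nat set"

fun pmatch :: "pitem list \<Rightarrow> nat list \<Rightarrow> bool" where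
  "pmatch [] w = (w = [])"
| "pmatch (Sym S # p) [] = False"
| "pmatch (Sym S # p) (x # w) = (x \<in> S \<and> pmatch p w)"
| "pmatch (Star S # p) [] = pmatch p []"
| "pmatch (Star S # p) (x # w) = (pmatch p (x # w) \<or> (x \<in> S \<and> pmatch (Star S # p) w))"

definition dotS :: "nat set" where "dotS = {0..7}"
definition dS :: "nat set" where "dS = {1,2,4,7}"
definition eS :: "nat set" where "eS = {0,3,5,6}"
definition hatS :: "nat \<Rightarrow> nat set" where "hatS t = {t, xor t 3, xor t 5}"
definition alpha0S :: "nat set" where "alpha0S = {0,1,2,3}"
definition beta0S :: "nat set" where "beta0S = {0,1,4,5}"
definition gamma0S :: "nat set" where "gamma0S = {0,2,4,6}"

abbreviation (input) D :: "nat \<Rightarrow> pitem" where "D t \<equiv> Sym {t}"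
abbreviation (input) H :: "nat \<Rightarrow> pitem" where "H t \<equiv> Star (hatS t)"

definition pat_d0 :: "pitem list" where
  "pat_d0 = [Star dotS, Sym dS, Star {0}]"

definition Q :: "bool \<Rightarrow> bool \<Rightarrow> pitem list list" where
  "Q a b = (case (a, b) of
     (False, False) \<Rightarrow>
       [pat_d0,
        [D 6, H 6, D 7, Star dotS],
        [D 7, H 7, D 6, Star dotS],
        [D 7, H 7, D 0, Star gamma0S]]
   | (False, True) \<Rightarrow>
       [pat_d0,
        [D 4, H 4, D 5, Star dotS],
        [D 4, H 4, D 0, Star beta0S],
        [D 5, H 5],
        [D 5, H 5, D 4, Star dotS],
        [D 5, H 5, D 1, Star beta0S],
        [D 5, H 5, D 2, Star gamma0S],
        [Star beta0S]]
   | (True, False) \<Rightarrow>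
       [pat_d0,
        [D 2, H 2, D 3, Star dotS],
        [D 2, H 2, D 0, Star alpha0S],
        [D 3, H 3],
        [D 3, H 3, D 2, Star dotS],
        [D 3, H 3, D 1, Star alpha0S],
        [D 3, H 3, D 4, Star gamma0S],
        [Star alpha0S]]
   | (True, True) \<Rightarrow>
       [pat_d0,
        [D 0, H 0],
        [D 0, H 0, D 1, Star dotS],
        [D 0, H 0, D 2, Star alpha0S],
        [D 0, H 0, D 4, Star beta0S],
        [D 1, H 1, D 0, Star dotS],
        [D 1, H 1, D 3, Star alpha0S],
        [D 1, H 1, D 5, Star beta0S],
        [D 1, H 1, D 6, Star gamma0S],
        [Star alpha0S],
        [Star beta0S]])"

end

theory Submission
  imports Defs
begin

definition tab0 :: "nat list list" where "tab0 = [[0,3,5,6], [3,5], [3,6], [3], [5,6], [5], [6], []]"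

definition R00 :: "(nat list \<times> nat list) list" where
  "R00 = [([],[0,2,19]),
    ([],[0,2,35]),
    ([],[0,19]),
    ([],[0,35]),
    ([0],[0,17]),
    ([0,1],[0,16,32,48]),
    ([0,3],[0]),
    ([0,3,5],[0]),
    ([0,3,5,6],[0]),
    ([0,3,6],[0]),
    ([0,5],[0]),
    ([0,5,6],[0]),
    ([0,6],[0]),
    ([1],[0,2,33,49]),
    ([1,2],[0,2]),
    ([1,2,4],[0,2]),
    ([1,2,4,7],[0,2]),
    ([1,2,7],[0,2]),
    ([1,4],[0,2]),
    ([1,4,7],[0,2]),
    ([1,7],[0,2,51]),
    ([2,4],[0,2]),
    ([2,4,7],[0,2]),
    ([3,5],[0,2,51]),
    ([3,5],[0,51]),
    ([3,5,6],[0,2])]"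

definition R01 :: "(nat list \<times> nat list) list" where
  "R01 = [([],[0,2,19]),
    ([],[0,2,19,112]),
    ([],[0,2,67]),
    ([],[0,2,67,112]),
    ([],[0,19]),
    ([],[0,19,112]),
    ([],[0,67]),
    ([],[0,67,112]),
    ([0,3],[0]),
    ([0,3,5],[0]),
    ([0,3,5,6],[0]),
    ([0,3,6],[0]),
    ([0,5,6],[0]),
    ([0,6],[0]),
    ([1,2],[0,2]),
    ([1,2,4],[0,2]),
    ([1,2,4,7],[0,2]),
    ([1,2,7],[0,2]),
    ([1,4,7],[0,2]),
    ([1,7],[0,2,99]),
    ([2],[0,2,17,33]),
    ([2],[0,2,17,33,112]),
    ([2,3],[0,16,32,48,64,80,96,112]),
    ([2,4],[0,2]),
    ([2,4,7],[0,2]),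
    ([2,7],[0,2,35]),
    ([2,7],[0,2,35,112]),
    ([2,7],[0,2,83]),
    ([2,7],[0,2,83,112]),
    ([2,7],[0,2,112]),
    ([3],[0,49,65,81,97]),
    ([3],[0,49,65,81,97,112]),
    ([3,5],[0,2,99]),
    ([3,5],[0,99]),
    ([3,5,6],[0,2]),
    ([3,6],[0,2,35]),
    ([3,6],[0,2,35,112]),
    ([3,6],[0,2,83]),
    ([3,6],[0,2,83,112]),
    ([3,6],[0,2,112]),
    ([3,6],[0,35]),
    ([3,6],[0,35,112]),
    ([3,6],[0,83]),
    ([3,6],[0,83,112]),
    ([3,6],[0,112])]"

definition R10 :: "(nat list \<times> nat list) list" where
  "R10 = [([],[0,2,19]),
    ([],[0,2,19,112]),
    ([],[0,2,67]),
    ([],[0,2,67,112]),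
    ([],[0,19]),
    ([],[0,19,112]),
    ([],[0,67]),
    ([],[0,67,112]),
    ([0,3,5],[0]),
    ([0,3,5,6],[0]),
    ([0,3,6],[0]),
    ([0,5],[0]),
    ([0,5,6],[0]),
    ([0,6],[0]),
    ([1,2,4],[0,2]),
    ([1,2,4,7],[0,2]),
    ([1,2,7],[0,2]),
    ([1,4],[0,2]),
    ([1,4,7],[0,2]),
    ([1,7],[0,2,99]),
    ([2,4],[0,2]),
    ([2,4,7],[0,2]),
    ([3,5],[0,2,99]),
    ([3,5],[0,99]),
    ([3,5,6],[0,2]),
    ([4],[0,2,17,33]),
    ([4],[0,2,17,33,112]),
    ([4,5],[0,16,32,48,64,80,96,112]),
    ([4,7],[0,2,35]),
    ([4,7],[0,2,35,112]),
    ([4,7],[0,2,83]),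
    ([4,7],[0,2,83,112]),
    ([4,7],[0,2,112]),
    ([5],[0,49,65,81,97]),
    ([5],[0,49,65,81,97,112]),
    ([5,6],[0,2,35]),
    ([5,6],[0,2,35,112]),
    ([5,6],[0,2,83]),
    ([5,6],[0,2,83,112]),
    ([5,6],[0,2,112]),
    ([5,6],[0,35]),
    ([5,6],[0,35,112]),
    ([5,6],[0,83]),
    ([5,6],[0,83,112]),
    ([5,6],[0,112])]"

definition R11 :: "(nat list \<times> nat list) list" where
  "R11 = [([],[0,2,35]),
    ([],[0,2,35,144]),
    ([],[0,2,35,144,160]),
    ([],[0,2,35,160]),
    ([],[0,2,83]),
    ([],[0,2,83,144]),
    ([],[0,2,83,144,160]),
    ([],[0,2,83,160]),
    ([],[0,35]),
    ([],[0,35,144]),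
    ([],[0,35,160]),
    ([],[0,83]),
    ([],[0,83,144]),
    ([],[0,83,160]),
    ([0,3,5],[0]),
    ([0,3,5,6],[0]),
    ([0,3,6],[0]),
    ([0,5,6],[0]),
    ([0,6],[0]),
    ([1,2,4],[0,2]),
    ([1,2,4,7],[0,2]),
    ([1,2,7],[0,2]),
    ([1,4,7],[0,2]),
    ([1,7],[0,2,131]),
    ([2,4],[0,2]),
    ([2,4,7],[0,2]),
    ([2,7],[0,2,67]),
    ([2,7],[0,2,67,160]),
    ([2,7],[0,2,115]),
    ([2,7],[0,2,115,160]),
    ([2,7],[0,2,160]),
    ([3,5],[0,2,131]),
    ([3,5],[0,131]),
    ([3,5,6],[0,2]),
    ([3,6],[0,2,67]),
    ([3,6],[0,2,67,160]),
    ([3,6],[0,2,115]),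
    ([3,6],[0,2,115,160]),
    ([3,6],[0,2,160]),
    ([3,6],[0,67]),
    ([3,6],[0,67,160]),
    ([3,6],[0,115]),
    ([3,6],[0,115,160]),
    ([3,6],[0,160]),
    ([4,7],[0,2,51]),
    ([4,7],[0,2,51,144]),
    ([4,7],[0,2,99]),
    ([4,7],[0,2,99,144]),
    ([4,7],[0,2,144]),
    ([5,6],[0,2,51]),
    ([5,6],[0,2,51,144]),
    ([5,6],[0,2,99]),
    ([5,6],[0,2,99,144]),
    ([5,6],[0,2,144]),
    ([5,6],[0,51]),
    ([5,6],[0,51,144]),
    ([5,6],[0,99]),
    ([5,6],[0,99,144]),
    ([5,6],[0,144]),
    ([6],[0,17,33,49,65]),
    ([6],[0,17,33,49,65,144]),
    ([6],[0,17,33,49,65,144,160]),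
    ([6],[0,17,33,49,65,160]),
    ([6,7],[0,16,32,48,64,80,96,112,128,144,160]),
    ([7],[0,2,81,97,113,129]),
    ([7],[0,2,81,97,113,129,144]),
    ([7],[0,2,81,97,113,129,144,160]),
    ([7],[0,2,81,97,113,129,160])]"

definition stab :: "nat list list list" where "stab = [[[0,3,5,6], [3,5], [3,6], [3], [5,6], [5], [6], []], [[2,4], [1,2,4,7], [2], [2,7], [4], [4,7], [], [7]], [[1,4], [1], [1,2,4,7], [1,7], [4], [], [4,7], [7]], [[0], [0,5], [0,6], [0,3,5,6], [], [5], [6], [5,6]], [[1,2], [1], [2], [], [1,2,4,7], [1,7], [2,7], [7]], [[0], [0,3], [], [3], [0,6], [0,3,5,6], [6], [3,6]], [[0], [], [0,3], [3], [0,5], [5], [0,3,5,6], [3,5]], [[], [1], [2], [1,2], [4], [1,4], [2,4], [1,2,4,7]]]"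

definition stabl :: "nat \<Rightarrow> nat \<Rightarrow> nat list" where
  "stabl k i = map (\<lambda>j. xor j k) (tab0 ! xor i k)"

definition stepS :: "nat list \<Rightarrow> nat \<Rightarrow> nat list" where
  "stepS S k = filter (\<lambda>j. \<exists>i\<in>set S. j \<in> set (stab ! k ! i)) [0..<8]"

fun runS :: "nat list \<Rightarrow> nat list \<Rightarrow> nat list" where
  "runS S [] = S"
| "runS S (k # w) = runS (stepS S k) w"

fun dv :: "pitem list \<Rightarrow> nat \<Rightarrow> nat \<Rightarrow> nat list" where
  "dv [] i x = []"
| "dv (Sym S # p) i x = (if x \<in> S then [Suc i] else [])"
| "dv (Star S # p) i x = dv p (Suc i) x @ (if x \<in> S then [i] else [])"

fun nullable :: "pitem list \<Rightarrow> bool" where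
  "nullable [] = True"
| "nullable (Sym S # p) = False"
| "nullable (Star S # p) = nullable p"

definition stepP :: "pitem list list \<Rightarrow> nat list \<Rightarrow> nat \<Rightarrow> nat list" where
  "stepP P T k = sort (remdups (concat (map (\<lambda>c. map (\<lambda>j. 16 * (c div 16) + j)
      (dv (drop (c mod 16) (P ! (c div 16))) (c mod 16) k)) T)))"

definition accP :: "pitem list list \<Rightarrow> nat list \<Rightarrow> bool" where
  "accP P T = (\<exists>c\<in>set T. nullable (drop (c mod 16) (P ! (c div 16))))"

definition pm :: "pitem list list \<Rightarrow> nat list \<Rightarrow> nat list \<Rightarrow> bool" where
  "pm P T w = (\<exists>c\<in>set T. pmatch (drop (c mod 16) (P ! (c div 16))) w)"

definition closed :: "pitem list list \<Rightarrow> (nat list \<times> nat list) list \<Rightarrow> bool" where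
  "closed P R = list_all (\<lambda>(S,T). (0 \<notin> set S \<longleftrightarrow> accP P T)
      \<and> list_all (\<lambda>c. c div 16 < length P) T
      \<and> list_all (\<lambda>k. (stepS S k, stepP P T k) \<in> set R) [0..<8]) R"

lemma lt8: "(i::nat) < 8 \<longleftrightarrow> i \<in> {0,1,2,3,4,5,6,7}" by auto

lemma A0_ok: assumes "i < 8" "j < 8"
  shows "(A0 i j \<noteq> 0 \<longleftrightarrow> j \<in> set (tab0 ! i)) \<and> A0 i j \<ge> 0"
  using assms unfolding lt8
  by (simp only: insert_iff empty_iff) (elim disjE; simp add: A0_def A0_rows_def tab0_def)

lemma stab_all: "list_all (\<lambda>k. list_all (\<lambda>i. set (stab ! k ! i) = set (map (\<lambda>j. xor j k) (tab0 ! xor i k)) \<and> xor i k < 8) [0..<8]) [0..<8]"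
  by code_simp

lemma stab_eq: "i < 8 \<Longrightarrow> k < 8 \<Longrightarrow> set (stab ! k ! i) = set (map (\<lambda>j. xor j k) (tab0 ! xor i k)) \<and> xor i k < (8::nat)"
  using stab_all by (simp add: list_all_iff)

lemma xor_inv: "xor (xor j k) k = (j::nat)"
  by (simp add: xor.assoc)

lemma stab_ok:
  assumes "i < 8" "j < 8" "k < 8"
  shows "(Amat k i j \<noteq> 0 \<longleftrightarrow> j \<in> set (stab ! k ! i)) \<and> Amat k i j \<ge> 0"
proof -
  have e: "set (stab ! k ! i) = set (map (\<lambda>j. xor j k) (tab0 ! xor i k))" "xor i k < 8"
    using stab_eq[OF assms(1,3)] by auto
  have "xor j k < 8" using stab_eq[OF assms(2,3)] by auto
  note a = A0_ok[OF e(2) this]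
  have "j \<in> set (map (\<lambda>j. xor j k) (tab0 ! xor i k)) \<longleftrightarrow> xor j k \<in> set (tab0 ! xor i k)"
    by (auto simp: xor_inv) (metis xor_inv imageI)
  then show ?thesis using a e(1) by (simp add: Amat_def)
qed

lemma nullable_pmatch: "pmatch p [] \<longleftrightarrow> nullable p"
  by (induction p rule: nullable.induct) auto

lemma drop_Cons_Suc: "drop i p0 = a # p \<Longrightarrow> drop (Suc i) p0 = p"
  by (metis drop_Suc list.sel(3) tl_drop)

lemma dv_pmatch:
  "drop i p0 = p \<Longrightarrow> pmatch p (x # w) \<longleftrightarrow> (\<exists>j\<in>set (dv p i x). pmatch (drop j p0) w)"
proof (induction p i x rule: dv.induct)
  case (1 i x)
  then show ?case by simp
next
  case (2 S p i x)
  then show ?case using drop_Cons_Suc[OF 2(1)] by auto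
next
  case (3 S p i x)
  have IH: "pmatch p (x # w) \<longleftrightarrow> (\<exists>j\<in>set (dv p (Suc i) x). pmatch (drop j p0) w)"
    using 3(1)[OF drop_Cons_Suc[OF 3(2)]] .
  show ?case using IH 3(2) by auto
qed

lemma dv_bound:
  "drop i p0 = p \<Longrightarrow> j \<in> set (dv p i x) \<Longrightarrow> j \<le> length p0"
proof (induction p i x rule: dv.induct)
  case (1 i x)
  then show ?case by simp
next
  case (2 S p i x)
  have "i < length p0" using 2(1) by (metis drop_eq_Nil not_le list.distinct(1))
  then show ?case using 2 by (auto split: if_splits)
next
  case (3 S p i x)
  have "i < length p0" using 3(2) by (metis drop_eq_Nil not_le list.distinct(1))
  then show ?case using 3(1)[OF drop_Cons_Suc[OF 3(2)]] 3(3) by (auto split: if_splits)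
qed

lemma pm_step:
  assumes T: "\<forall>c\<in>set T. c div 16 < length P" and P: "\<forall>p\<in>set P. length p < 16"
  shows "pm P T (k # w) \<longleftrightarrow> pm P (stepP P T k) w"
proof -
  have "pm P T (k # w) \<longleftrightarrow> (\<exists>c\<in>set T. \<exists>j\<in>set (dv (drop (c mod 16) (P ! (c div 16))) (c mod 16) k).
          pmatch (drop j (P ! (c div 16))) w)"
    unfolding pm_def using dv_pmatch by blast
  also have "\<dots> \<longleftrightarrow> pm P (stepP P T k) w"
  proof
    assume "\<exists>c\<in>set T. \<exists>j\<in>set (dv (drop (c mod 16) (P ! (c div 16))) (c mod 16) k).
          pmatch (drop j (P ! (c div 16))) w"
    then obtain c j where c: "c \<in> set T" and j: "j \<in> set (dv (drop (c mod 16) (P ! (c div 16))) (c mod 16) k)"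
      and m: "pmatch (drop j (P ! (c div 16))) w" by blast
    have "j \<le> length (P ! (c div 16))" using dv_bound[OF refl j] .
    moreover have "length (P ! (c div 16)) < 16" using T P c by auto
    ultimately have j16: "j < 16" by simp
    let ?e = "16 * (c div 16) + j"
    have "?e div 16 = c div 16" "?e mod 16 = j" using j16 by auto
    moreover have "?e \<in> set (stepP P T k)" unfolding stepP_def using c j by auto
    ultimately show "pm P (stepP P T k) w" unfolding pm_def using m by metis
  next
    assume "pm P (stepP P T k) w"
    then obtain e where e: "e \<in> set (stepP P T k)" and m: "pmatch (drop (e mod 16) (P ! (e div 16))) w"
      unfolding pm_def by blast
    from e obtain c j where c: "c \<in> set T" and j: "j \<in> set (dv (drop (c mod 16) (P ! (c div 16))) (c mod 16) k)"
      and ee: "e = 16 * (c div 16) + j" unfolding stepP_def by auto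
    have "j \<le> length (P ! (c div 16))" using dv_bound[OF refl j] .
    moreover have "length (P ! (c div 16)) < 16" using T P c by auto
    ultimately have j16: "j < 16" by simp
    have "e div 16 = c div 16" "e mod 16 = j" using j16 ee by auto
    then show "\<exists>c\<in>set T. \<exists>j\<in>set (dv (drop (c mod 16) (P ! (c div 16))) (c mod 16) k).
          pmatch (drop j (P ! (c div 16))) w" using c j m by metis
  qed
  finally show ?thesis .
qed

lemma R_main:
  assumes cl: "closed P R" and P: "\<forall>p\<in>set P. length p < 16"
  shows "(S, T) \<in> set R \<Longrightarrow> set w \<subseteq> {..<8} \<Longrightarrow> (0 \<notin> set (runS S w) \<longleftrightarrow> pm P T w)"
proof (induction w arbitrary: S T)
  case Nil
  then show ?case using cl unfolding closed_def list_all_iff accP_def pm_def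
    by (auto simp: nullable_pmatch)
next
  case (Cons k w)
  have k: "k < 8" and w: "set w \<subseteq> {..<8}" using Cons.prems by auto
  have inR: "(stepS S k, stepP P T k) \<in> set R" and Tb: "\<forall>c\<in>set T. c div 16 < length P"
    using cl Cons.prems(1) k unfolding closed_def list_all_iff by fastforce+
  show ?case using Cons.IH[OF inR w] pm_step[OF Tb P] by simp
qed

definition vval :: "vec8 \<Rightarrow> nat list \<Rightarrow> rat" where
  "vval u w = (\<Sum>i<8. u i * matprod w i 0)"

definition vstep :: "vec8 \<Rightarrow> nat \<Rightarrow> vec8" where
  "vstep u k = (\<lambda>j. \<Sum>i<8. u i * Amat k i j)"

definition suppl :: "vec8 \<Rightarrow> nat list" where
  "suppl u = filter (\<lambda>i. u i \<noteq> 0) [0..<8]"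

lemma vval_nil: "vval u [] = u 0"
  by (simp add: vval_def matprod_def idmat_def)

lemma vval_cons: "vval u (k # w) = vval (vstep u k) w"
proof -
  have "vval u (k # w) = (\<Sum>i<8. \<Sum>l<8. u i * (Amat k i l * matprod w l 0))"
    by (simp add: vval_def matprod_def matmul_def sum_distrib_left)
  also have "\<dots> = (\<Sum>l<8. \<Sum>i<8. u i * Amat k i l * matprod w l 0)"
    by (subst sum.swap) (simp add: mult.assoc)
  also have "\<dots> = vval (vstep u k) w"
    by (simp add: vval_def vstep_def sum_distrib_right)
  finally show ?thesis .
qed

lemma vstep_props:
  assumes u: "\<forall>i<8. u i \<ge> 0" and k: "k < 8" and j: "j < 8"
  shows "vstep u k j \<ge> 0 \<and> (vstep u k j \<noteq> 0 \<longleftrightarrow> (\<exists>i\<in>set (suppl u). j \<in> set (stab ! k ! i)))"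
proof -
  have nn: "\<forall>i\<in>{..<8}. u i * Amat k i j \<ge> 0" using u stab_ok[OF _ j k] by auto
  have "vstep u k j = 0 \<longleftrightarrow> (\<forall>i\<in>{..<8}. u i * Amat k i j = 0)"
    unfolding vstep_def by (rule sum_nonneg_eq_0_iff) (use nn in auto)
  also have "\<dots> \<longleftrightarrow> \<not> (\<exists>i\<in>set (suppl u). j \<in> set (stab ! k ! i))"
    using stab_ok[OF _ j k] by (auto simp: suppl_def)
  finally show ?thesis using nn unfolding vstep_def by (auto intro: sum_nonneg)
qed

lemma sem:
  "\<forall>i<8. u i \<ge> 0 \<Longrightarrow> set w \<subseteq> {..<8} \<Longrightarrow> (vval u w = 0 \<longleftrightarrow> 0 \<notin> set (runS (suppl u) w))"
proof (induction w arbitrary: u)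
  case Nil
  then show ?case by (simp add: vval_nil suppl_def)
next
  case (Cons k w)
  have k: "k < 8" and w: "set w \<subseteq> {..<8}" using Cons.prems by auto
  have nn: "\<forall>j<8. vstep u k j \<ge> 0" using vstep_props[OF Cons.prems(1) k] by blast
  have "suppl (vstep u k) = stepS (suppl u) k"
    unfolding suppl_def[of "vstep u k"] stepS_def
    by (rule filter_cong) (use vstep_props[OF Cons.prems(1) k] in auto)
  then show ?case using Cons.IH[OF nn w] by (simp add: vval_cons)
qed

lemma padp_vval: "padp a b \<alpha> \<beta> \<gamma> = vval (Lvec a b) (omega \<alpha> \<beta> \<gamma>)"
  by (simp add: padp_def vval_def e0_def Let_def)

lemma omega_lt8: "set (omega \<alpha> \<beta> \<gamma>) \<subseteq> {..<8}"
  by (auto simp: omega_def set_zip)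

lemma pm_init: "pm P (map (\<lambda>q. 16 * q) [0..<length P]) w \<longleftrightarrow> (\<exists>p\<in>set P. pmatch p w)"
proof -
  have "pm P (map (\<lambda>q. 16 * q) [0..<length P]) w \<longleftrightarrow> (\<exists>q<length P. pmatch (P ! q) w)"
    unfolding pm_def by auto
  also have "\<dots> \<longleftrightarrow> (\<exists>p\<in>set P. pmatch p w)"
    by (metis in_set_conv_nth)
  finally show ?thesis .
qed

lemma final:
  assumes "closed P R" "\<forall>p\<in>set P. length p < 16"
    "(suppl (Lvec a b), map (\<lambda>q. 16 * q) [0..<length P]) \<in> set R"
  shows "padp a b \<alpha> \<beta> \<gamma> = 0 \<longleftrightarrow> (\<exists>p\<in>set P. pmatch p (omega \<alpha> \<beta> \<gamma>))"
proof -
  have "\<forall>i<8. Lvec a b i \<ge> 0" by (simp add: Lvec_def)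
  then show ?thesis
    using sem[OF _ omega_lt8] R_main[OF assms(1,2) assms(3) omega_lt8] pm_init
    by (simp add: padp_vval)
qed

lemma Qlen: "\<forall>p\<in>set (Q a b). length p < 16"
  by (cases a; cases b) (simp_all add: Q_def pat_d0_def)

lemma closed00: "closed (Q False False) R00"
  by code_simp

lemma init00: "(suppl (Lvec False False), map (\<lambda>q. 16 * q) [0..<length (Q False False)]) \<in> set R00"
  by code_simp

lemma closed01: "closed (Q False True) R01"
  by code_simp

lemma init01: "(suppl (Lvec False True), map (\<lambda>q. 16 * q) [0..<length (Q False True)]) \<in> set R01"
  by code_simp

lemma closed10: "closed (Q True False) R10"
  by code_simp

lemma init10: "(suppl (Lvec True False), map (\<lambda>q. 16 * q) [0..<length (Q True False)]) \<in> set R10"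
  by code_simp

lemma closed11: "closed (Q True True) R11"
  by code_simp

lemma init11: "(suppl (Lvec True True), map (\<lambda>q. 16 * q) [0..<length (Q True True)]) \<in> set R11"
  by code_simp

theorem theorem8:
  fixes \<alpha> \<beta> \<gamma> :: "bool list" and a b :: bool
  assumes "length \<alpha> = n" and "length \<beta> = n" and "length \<gamma> = n"
  shows "padp a b \<alpha> \<beta> \<gamma> = 0 \<longleftrightarrow>
         (\<exists>p \<in> set (Q a b). pmatch p (omega \<alpha> \<beta> \<gamma>))"
  using final[OF closed00 Qlen init00] final[OF closed01 Qlen init01]
    final[OF closed10 Qlen init10] final[OF closed11 Qlen init11]
  by (cases a; cases b) simp_all

end
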